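(* Let $F$ be a field, $d\ge1$, and $x:\mathbb Z^2\to F$ such that $\det M^{(d+1)}_{j,k}=1$ and $\det M^{(d)}_{j,k}\neq0$ for all $j,k\in\mathbb Z$. Then there exist functions $c_1,\dots,c_d:\mathbb Z\to F$ such that for all $j,k\in\mathbb Z$, $$0=x_{j,k-d}+\sum_{i=1}^d(-1)^i\,c_i(j+k)\,x_{j+i,k+i-d}-(-1)^d\,x_{j+d+1,k+1}.$$ That is, the coefficients of this linear recursion depend only on $j+k$ and not on $j-k$.
   Context: For $m\ge1$, $M^{(m)}_{j,k}$ denotes the $m\times m$ matrix whose $(r,c)$ entry ($0\le r,c\le m-1$) is $x_{j-r+c,\;k-(m-1)+r+c}$. *)

theory Defs
  imports "Jordan_Normal_Form.Determinant"
begin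

definition Mjk :: "(int \<times> int \<Rightarrow> 'a) \<Rightarrow> nat \<Rightarrow> int \<Rightarrow> int \<Rightarrow> 'a mat" where
  "Mjk x m j k = mat m m (\<lambda>(r, c).
      x (j - int r + int c, k - (int m - 1) + int r + int c))"

end

theory Submission
  imports Defs
begin

lemma exist_ker:
  fixes N :: "nat \<Rightarrow> nat \<Rightarrow> 'a::field"
  assumes dA: "det (mat (Suc m) (Suc m) (\<lambda>(r,c). N r c)) = 1"
    and dB: "det (mat (Suc m) (Suc m) (\<lambda>(r,c). N r (Suc c))) = 1"
  shows "\<exists>\<alpha>. \<alpha> 0 = 1 \<and> \<alpha> (Suc m) = - ((-1)^m) \<and>
     (\<forall>r<Suc m. (\<Sum>i<Suc (Suc m). \<alpha> i * N r i) = 0)"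
proof -
  define B where "B = mat (Suc m) (Suc m) (\<lambda>(r,c). N r (Suc c))"
  define v where "v = vec (Suc m) (\<lambda>r. N r 0)"
  define z where "z = adj_mat B *\<^sub>v v"
  have Bc: "B \<in> carrier_mat (Suc m) (Suc m)" by (simp add: B_def)
  have vc: "v \<in> carrier_vec (Suc m)" by (simp add: v_def)
  have zc: "z \<in> carrier_vec (Suc m)" unfolding z_def using adj_mat(1)[OF Bc] vc by (rule mult_mat_vec_carrier)
  have dB': "det B = 1" using dB by (simp add: B_def)
  have Bz: "B *\<^sub>v z = v"
  proof -
    have e1: "B *\<^sub>v z = (B * adj_mat B) *\<^sub>v v"
      unfolding z_def using assoc_mult_mat_vec[OF Bc adj_mat(1)[OF Bc] vc] by simp
    have "(1::'a) \<cdot>\<^sub>m 1\<^sub>m (Suc m) = 1\<^sub>m (Suc m)" by (rule eq_matI) auto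
    hence "B * adj_mat B = 1\<^sub>m (Suc m)" using adj_mat(2)[OF Bc] dB' by simp
    thus ?thesis using vc e1 by simp
  qed
  define \<alpha> where "\<alpha> = (\<lambda>i. if i = 0 then 1 else - z $ (i - 1))"
  have ker: "\<forall>r<Suc m. (\<Sum>i<Suc (Suc m). \<alpha> i * N r i) = 0"
  proof (intro allI impI)
    fix r assume r: "r < Suc m"
    have "(\<Sum>i<Suc (Suc m). \<alpha> i * N r i) = N r 0 - (\<Sum>i<Suc m. N r (Suc i) * z $ i)"
      unfolding sum.lessThan_Suc_shift by (simp add: \<alpha>_def sum_negf mult.commute)
    also have "(\<Sum>i<Suc m. N r (Suc i) * z $ i) = (B *\<^sub>v z) $ r"
      using r zc by (simp add: B_def mult_mat_vec_def scalar_prod_def atLeast0LessThan)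
    also have "\<dots> = N r 0" using Bz r by (simp add: v_def)
    finally show "(\<Sum>i<Suc (Suc m). \<alpha> i * N r i) = 0" by simp
  qed
  have cr: "det (replace_col B v m) = z $ m"
    using cramer_lemma_mat[OF Bc zc, of m] Bz dB' by simp
  have RC: "replace_col B v m \<in> carrier_mat (Suc m) (Suc m)" using Bc by (simp add: replace_col_def)
  have "swap_col_to_front (replace_col B v m) m = mat (Suc m) (Suc m) (\<lambda>(r,c). N r c)"
    by (subst swap_col_to_front_result[OF RC], simp, rule eq_matI,
        auto simp: replace_col_def B_def v_def)
  hence "1 = (-1)^m * z $ m"
    using swap_col_to_front_det[OF RC, of m] dA cr by simp
  note h = this
  have ss: "(-1)^m * (-1)^m = (1::'a)" by (simp flip: power_mult_distrib)
  have "z $ m = ((-1)^m * (-1)^m) * z $ m" using ss by simp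
  also have "\<dots> = (-1)^m * ((-1)^m * z $ m)" by (simp only: mult.assoc)
  also have "\<dots> = (-1)^m" by (simp only: h[symmetric] mult_1_right)
  finally have zm: "z $ m = (-1)^m" .
  show ?thesis
    by (rule exI[of _ \<alpha>]) (use ker zm in \<open>simp add: \<alpha>_def\<close>)
qed

lemma uniq_ker:
  fixes N :: "nat \<Rightarrow> nat \<Rightarrow> 'a::field"
  assumes dC: "det (mat m m (\<lambda>(r,c). N r (Suc c))) \<noteq> 0"
    and a0: "\<alpha> 0 = \<beta> 0" and am: "\<alpha> (Suc m) = \<beta> (Suc m)"
    and ka: "\<forall>r<m. (\<Sum>i<Suc (Suc m). \<alpha> i * N r i) = 0"
    and kb: "\<forall>r<m. (\<Sum>i<Suc (Suc m). \<beta> i * N r i) = 0"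
  shows "\<forall>i<Suc (Suc m). \<alpha> i = \<beta> i"
proof -
  define C where "C = mat m m (\<lambda>(r,c). N r (Suc c))"
  define \<delta> where "\<delta> = vec m (\<lambda>c. \<alpha> (Suc c) - \<beta> (Suc c))"
  have Cc: "C \<in> carrier_mat m m" by (simp add: C_def)
  have dc: "\<delta> \<in> carrier_vec m" by (simp add: \<delta>_def)
  have Cd: "C *\<^sub>v \<delta> = 0\<^sub>v m"
  proof (rule eq_vecI)
    fix r assume r: "r < dim_vec (0\<^sub>v m :: 'a vec)"
    hence r: "r < m" by simp
    have "(\<Sum>i<Suc (Suc m). (\<alpha> i - \<beta> i) * N r i) = 0"
      using ka kb r by (simp add: left_diff_distrib sum_subtractf)
    hence "(\<Sum>i<m. (\<alpha> (Suc i) - \<beta> (Suc i)) * N r (Suc i)) = 0"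
      using a0 am by (simp only: sum.lessThan_Suc_shift[of _ "Suc m"] sum.lessThan_Suc[of _ m]) simp
    hence "(\<Sum>i<m. N r (Suc i) * (\<alpha> (Suc i) - \<beta> (Suc i))) = 0"
      by (simp add: mult.commute)
    thus "(C *\<^sub>v \<delta>) $ r = 0\<^sub>v m $ r"
      using r by (simp add: C_def \<delta>_def mult_mat_vec_def scalar_prod_def atLeast0LessThan)
  qed (auto simp: C_def)
  have "\<delta> = 0\<^sub>v m"
    using det_0_iff_vec_prod_zero_field[OF Cc] dC Cd dc unfolding C_def by blast
  hence "\<forall>c<m. \<alpha> (Suc c) = \<beta> (Suc c)"
    by (metis (no_types, lifting) \<delta>_def index_vec index_zero_vec(1) right_minus_eq)
  thus ?thesis using a0 am
    by (metis less_Suc_eq less_Suc_eq_0_disj)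
qed

theorem mainTheorem6:
  fixes x :: "int \<times> int \<Rightarrow> 'a::field" and d :: nat
  assumes "d \<ge> 1"
    and "\<And>j k. det (Mjk x (d + 1) j k) = 1"
    and "\<And>j k. det (Mjk x d j k) \<noteq> 0"
  shows "\<exists>c :: nat \<Rightarrow> int \<Rightarrow> 'a. \<forall>j k.
     0 = x (j, k - int d)
         + (\<Sum>i = 1..d. (-1) ^ i * c i (j + k) * x (j + int i, k + int i - int d))
         - (-1) ^ d * x (j + int d + 1, k + 1)"
proof -
  note d1 = assms(2) and d0 = assms(3)
  have perS: "\<exists>\<alpha>. \<alpha> 0 = 1 \<and> \<alpha> (Suc d) = - ((-1)^d) \<and>
     (\<forall>t. (\<Sum>i<Suc (Suc d). \<alpha> i * x (t + int i, s - t - int d + int i)) = 0)" for s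
  proof -
    define R where "R = (\<lambda>t (i::nat). x (t + int i, s - t - int d + int i))"
    have eA: "mat (Suc d) (Suc d) (\<lambda>(r,c). R (t - int r) c) = Mjk x (d+1) t (s-t)" for t
      by (rule eq_matI) (auto simp: R_def Mjk_def algebra_simps)
    have eB: "mat (Suc d) (Suc d) (\<lambda>(r,c). R (t - int r) (Suc c)) = Mjk x (d+1) (t+1) (s-t+1)" for t
      by (rule eq_matI) (auto simp: R_def Mjk_def algebra_simps)
    have eC: "mat d d (\<lambda>(r,c). R (t - int r) (Suc c)) = Mjk x d (t+1) (s-t)" for t
      by (rule eq_matI) (auto simp: R_def Mjk_def algebra_simps)
    have win: "\<exists>\<beta>. \<beta> 0 = 1 \<and> \<beta> (Suc d) = - ((-1)^d) \<and>
       (\<forall>r<Suc d. (\<Sum>i<Suc (Suc d). \<beta> i * R (t - int r) i) = 0)" for t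
      using exist_ker[of d "\<lambda>r i. R (t - int r) i"] eA[of t] eB[of t] d1 by simp
    obtain \<alpha> where a0: "\<alpha> 0 = 1" and am: "\<alpha> (Suc d) = - ((-1)^d)"
      and ak: "\<forall>r<Suc d. (\<Sum>i<Suc (Suc d). \<alpha> i * R (0 - int r) i) = 0"
      using win[of 0] by blast
    define P where "P = (\<lambda>t. \<forall>r<Suc d. (\<Sum>i<Suc (Suc d). \<alpha> i * R (t - int r) i) = 0)"
    have up: "P (t+1)" if "P t" for t
    proof -
      obtain \<beta> where b0: "\<beta> 0 = 1" and bm: "\<beta> (Suc d) = - ((-1)^d)"
        and bk: "\<forall>r<Suc d. (\<Sum>i<Suc (Suc d). \<beta> i * R (t + 1 - int r) i) = 0"
        using win[of "t+1"] by blast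
      have bk': "\<forall>r<d. (\<Sum>i<Suc (Suc d). \<beta> i * R (t - int r) i) = 0"
      proof (intro allI impI)
        fix r assume "r < d"
        thus "(\<Sum>i<Suc (Suc d). \<beta> i * R (t - int r) i) = 0"
          using bk[rule_format, of "Suc r"] by simp
      qed
      have "\<forall>i<Suc (Suc d). \<alpha> i = \<beta> i"
        by (rule uniq_ker[of d "\<lambda>r i. R (t - int r) i"])
           (use eC[of t] d0 a0 am b0 bm bk' that in \<open>auto simp: P_def\<close>)
      thus ?thesis using bk unfolding P_def
        by (metis (no_types, lifting) lessThan_iff sum.cong)
    qed
    have down: "P t" if "P (t+1)" for t
    proof -
      obtain \<beta> where b0: "\<beta> 0 = 1" and bm: "\<beta> (Suc d) = - ((-1)^d)"
        and bk: "\<forall>r<Suc d. (\<Sum>i<Suc (Suc d). \<beta> i * R (t - int r) i) = 0"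
        using win[of t] by blast
      have ak': "\<forall>r<d. (\<Sum>i<Suc (Suc d). \<alpha> i * R (t - int r) i) = 0"
      proof (intro allI impI)
        fix r assume "r < d"
        thus "(\<Sum>i<Suc (Suc d). \<alpha> i * R (t - int r) i) = 0"
          using that[unfolded P_def, rule_format, of "Suc r"] by simp
      qed
      have "\<forall>i<Suc (Suc d). \<alpha> i = \<beta> i"
        by (rule uniq_ker[of d "\<lambda>r i. R (t - int r) i"])
           (use eC[of t] d0 a0 am b0 bm bk ak' in \<open>auto\<close>)
      thus ?thesis using bk unfolding P_def
        by (metis (no_types, lifting) lessThan_iff sum.cong)
    qed
    have "P t" for t
    proof (induction t rule: int_induct[of _ 0])
      case base thus ?case using ak by (simp add: P_def)
    next
      case (step1 i) thus ?case using up by blast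
    next
      case (step2 i) thus ?case using down[of "i - 1"] by simp
    qed
    hence "\<forall>t. (\<Sum>i<Suc (Suc d). \<alpha> i * R t i) = 0"
      unfolding P_def by (metis diff_zero of_nat_0 zero_less_Suc)
    thus ?thesis using a0 am unfolding R_def by blast
  qed
  then obtain A where A: "\<And>s. A s 0 = 1" "\<And>s. A s (Suc d) = - ((-1)^d)"
     "\<And>s t. (\<Sum>i<Suc (Suc d). A s i * x (t + int i, s - t - int d + int i)) = 0"
    by metis
  show ?thesis
  proof (intro exI[of _ "\<lambda>i s. (-1)^i * A s i"] allI)
    fix j k
    let ?f = "\<lambda>i. A (j+k) i * x (j + int i, j + k - j - int d + int i)"
    have set: "{..<Suc (Suc d)} = insert 0 (insert (Suc d) {1..d})" by auto
    have "0 = (\<Sum>i<Suc (Suc d). ?f i)" using A(3)[of "j+k" j] by simp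
    also have "\<dots> = ?f 0 + ?f (Suc d) + (\<Sum>i = 1..d. ?f i)"
      unfolding set by (simp add: algebra_simps)
    also have "(\<Sum>i = 1..d. ?f i) = (\<Sum>i = 1..d. (-1) ^ i * ((-1)^i * A (j+k) i) * x (j + int i, k + int i - int d))"
    proof (rule sum.cong[OF refl])
      fix i
      have "(-1) ^ i * ((-1)^i * A (j+k) i) = ((-1)^i * (-1)^i) * (A (j+k) i :: 'a)" by (simp only: mult.assoc)
      also have "(-1)^i * (-1)^i = (1::'a)" by (simp flip: power_mult_distrib)
      finally show "?f i = (-1) ^ i * ((-1)^i * A (j+k) i) * x (j + int i, k + int i - int d)"
        by (simp add: algebra_simps)
    qed
    finally show "0 = x (j, k - int d)
         + (\<Sum>i = 1..d. (-1) ^ i * ((-1)^i * A (j+k) i) * x (j + int i, k + int i - int d))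
         - (-1) ^ d * x (j + int d + 1, k + 1)"
      using A(1)[of "j+k"] A(2)[of "j+k"] by (simp add: algebra_simps)
  qed
qed

end
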